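(* Let $k\ge\ell\ge1$ be integers. Then $\sup_G s_{k,\ell}(G)\ge \mathrm{OPT}(k,\ell)$, where the supremum is over all finite digraphs $G$.
   Context: Put $m=k+\ell$; use the convention $0^0=1$. Digraphs are finite, without loops; $xy$ denotes an arc from $x$ to $y$. The oriented star $S_{k,\ell}$ has a center $c$, a set $O$ of $k$ out-leaves and a set $I$ of $\ell$ in-leaves; its arcs are exactly $co$ ($o\in O$) and $ic$ ($i\in I$). For a digraph $G$ on $n$ vertices, let $\phi$ be a uniformly random map from $V(S_{k,\ell})$ to $V(G)$ (all $n^{m+1}$ maps equally likely), and let $\mathcal S$ be the set of maps $\phi$ that are isomorphisms from $S_{k,\ell}$ onto the induced subdigraph $G[\mathrm{Im}\,\phi]$ (in particular injective). Set $s_{k,\ell}(G)=\Pr[\phi\in\mathcal S]$. Define $\mathrm{OPT}(k,\ell)=2^{-2k}\max_{\alpha\in[0,1]}\{\alpha(1-\alpha)^{2k}+(1-\alpha)\alpha^{2k}\}$ if $k=\ell$, and, if $k>\ell$, $\mathrm{OPT}(k,\ell)=\max_{(\alpha,d)\in[0,\frac12]\times[0,\frac{k}{k+\ell}]}\{\alpha(1-\alpha)^{m}d^k(1-d)^\ell+\frac{(k-1)^{k-1}\ell^\ell}{(m-1)^{m-1}}(1-\alpha)\alpha^{m}(1-d)\}$. *)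

theory Defs
  imports "HOL-Analysis.Analysis"
begin

text \<open>A finite digraph: a finite nonempty vertex set V (vertices are naturals, which is
  no loss of generality up to isomorphism) and an arc set E \<subseteq> V \<times> V without loops.\<close>
definition digraph :: "nat set \<Rightarrow> (nat \<times> nat) set \<Rightarrow> bool" where
  "digraph V E \<longleftrightarrow> finite V \<and> V \<noteq> {} \<and> E \<subseteq> V \<times> V \<and> (\<forall>x. (x, x) \<notin> E)"

definition star_arc :: "nat \<Rightarrow> nat \<Rightarrow> nat \<Rightarrow> nat \<Rightarrow> bool" where
  "star_arc k l a b \<longleftrightarrow> (a = 0 \<and> b \<in> {1..k}) \<or> (a \<in> {k+1..k+l} \<and> b = 0)"

definition star_copies :: "nat \<Rightarrow> nat \<Rightarrow> nat set \<Rightarrow> (nat \<times> nat) set \<Rightarrow> (nat \<Rightarrow> nat) set" where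
  "star_copies k l V E = {\<phi> \<in> {0..k+l} \<rightarrow>\<^sub>E V. inj_on \<phi> {0..k+l} \<and>
     (\<forall>a\<in>{0..k+l}. \<forall>b\<in>{0..k+l}. ((\<phi> a, \<phi> b) \<in> E \<longleftrightarrow> star_arc k l a b))}"

definition s_density :: "nat \<Rightarrow> nat \<Rightarrow> nat set \<Rightarrow> (nat \<times> nat) set \<Rightarrow> real" where
  "s_density k l V E = real (card (star_copies k l V E)) / real (card V) ^ (k + l + 1)"

definition OPT :: "nat \<Rightarrow> nat \<Rightarrow> real" where
  "OPT k l = (if k = l then
      (1 / 2 ^ (2 * k)) * (SUP \<alpha>\<in>{0..1::real}. \<alpha> * (1 - \<alpha>) ^ (2 * k) + (1 - \<alpha>) * \<alpha> ^ (2 * k))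
    else
      (SUP p \<in> {0..1/2::real} \<times> {0..real k / real (k + l)}.
         (case p of (\<alpha>, d) \<Rightarrow>
           \<alpha> * (1 - \<alpha>) ^ (k + l) * d ^ k * (1 - d) ^ l
           + (real (k - 1) ^ (k - 1) * real l ^ l / real (k + l - 1) ^ (k + l - 1))
             * (1 - \<alpha>) * \<alpha> ^ (k + l) * (1 - d))))"

end

theory Submission
  imports Defs
begin

lemma inj_count:
  fixes S :: "nat \<Rightarrow> 'a set"
  assumes "\<forall>i<n. finite (S i)"
  shows "(\<Prod>i<n. card (S i) - n) \<le> card {\<phi> \<in> PiE {..<n} S. inj_on \<phi> {..<n}}"
  using assms
proof (induction n)
  case 0
  then show ?case by simp
next
  case (Suc n)
  define T where "T = {\<phi> \<in> PiE {..<n} S. inj_on \<phi> {..<n}}"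
  define T' where "T' = {\<phi> \<in> PiE {..<Suc n} S. inj_on \<phi> {..<Suc n}}"
  have finT: "finite T" unfolding T_def
    using Suc.prems by (intro finite_subset[OF _ finite_PiE[of "{..<n}" S]]) auto
  have IH: "(\<Prod>i<n. card (S i) - n) \<le> card T" using Suc T_def by auto
  define F :: "(nat \<Rightarrow> 'a) \<times> 'a \<Rightarrow> (nat \<Rightarrow> 'a)" where "F = (\<lambda>(\<psi>, x). \<psi>(n := x))"
  have inj: "inj_on F (SIGMA \<psi>:T. S n - \<psi> ` {..<n})"
  proof (rule inj_onI, clarsimp simp: F_def)
    fix \<psi> x \<psi>' x'
    assume "\<psi> \<in> T" "\<psi>' \<in> T" "\<psi>(n := x) = \<psi>'(n := x')"
    moreover have "\<psi> n = \<psi>' n" using \<open>\<psi> \<in> T\<close> \<open>\<psi>' \<in> T\<close> unfolding T_def by (auto simp: PiE_def extensional_def)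
    ultimately show "\<psi> = \<psi>' \<and> x = x'" by (metis fun_upd_same fun_upd_upd fun_upd_triv)
  qed
  have sub: "F ` (SIGMA \<psi>:T. S n - \<psi> ` {..<n}) \<subseteq> T'"
  proof (clarsimp simp: F_def T'_def T_def)
    fix \<psi> x assume a: "\<psi> \<in> PiE {..<n} S" "inj_on \<psi> {..<n}" "x \<in> S n" "x \<notin> \<psi> ` {..<n}"
    have "{..<Suc n} = insert n {..<n}" by auto
    then show "\<psi>(n := x) \<in> PiE {..<Suc n} S \<and> inj_on (\<psi>(n := x)) {..<Suc n}"
      using a by (auto simp: PiE_def extensional_def Pi_def inj_on_def)
  qed
  have finT': "finite T'" unfolding T'_def
    using Suc.prems by (intro finite_subset[OF _ finite_PiE[of "{..<Suc n}" S]]) auto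
  have "card (SIGMA \<psi>:T. S n - \<psi> ` {..<n}) \<le> card T'"
    using card_inj_on_le[OF inj sub finT'] .
  moreover have "card (SIGMA \<psi>:T. S n - \<psi> ` {..<n}) = (\<Sum>\<psi>\<in>T. card (S n - \<psi> ` {..<n}))"
    using finT Suc.prems by (intro card_SigmaI) auto
  moreover have "(\<Sum>\<psi>\<in>T. card (S n - \<psi> ` {..<n})) \<ge> (\<Sum>\<psi>\<in>T. card (S n) - n)"
  proof (rule sum_mono)
    fix \<psi> assume "\<psi> \<in> T"
    have "card (\<psi> ` {..<n}) \<le> n" using card_image_le[of "{..<n}" \<psi>] by simp
    moreover have "card (S n) - card (\<psi> ` {..<n}) \<le> card (S n - \<psi> ` {..<n})"
      by (rule diff_card_le_card_Diff) auto
    ultimately show "card (S n) - n \<le> card (S n - \<psi> ` {..<n})" by linarith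
  qed
  ultimately have A: "card T * (card (S n) - n) \<le> card T'" by simp
  have "(\<Prod>i<Suc n. card (S i) - Suc n) \<le> (\<Prod>i<n. card (S i) - n) * (card (S n) - n)"
    by (simp, intro mult_mono prod_mono) auto
  also have "\<dots> \<le> card T * (card (S n) - n)" using IH by simp
  finally show ?case using A T'_def by simp
qed

lemma prod_split_if:
  fixes a b :: "'a::comm_monoid_mult"
  shows "(\<Prod>i<k+l. if i < k then a else b) = a ^ k * b ^ l"
proof (induction l)
  case 0
  then show ?case by simp
next
  case (Suc l)
  then show ?case by (simp add: ac_simps)
qed

lemma graph_bound:
  fixes K k l :: nat and H :: "nat \<Rightarrow> nat \<Rightarrow> bool" and s :: "nat \<Rightarrow> nat"
    and Out In :: "nat \<Rightarrow> nat set"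
  assumes K: "K > 0" and s1: "\<And>c. c < K \<Longrightarrow> s c \<ge> 1"
    and irr: "\<And>a. \<not> H a a" and asym: "\<And>a b. H a b \<Longrightarrow> \<not> H b a"
    and OutK: "\<And>c. c < K \<Longrightarrow> Out c \<subseteq> {..<K}" and InK: "\<And>c. c < K \<Longrightarrow> In c \<subseteq> {..<K}"
    and Hout: "\<And>c x. c < K \<Longrightarrow> x \<in> Out c \<Longrightarrow> H c x"
    and Hin: "\<And>c i. c < K \<Longrightarrow> i \<in> In c \<Longrightarrow> H i c"
    and indep: "\<And>c x y. c < K \<Longrightarrow> x \<in> Out c \<union> In c \<Longrightarrow> y \<in> Out c \<union> In c \<Longrightarrow> \<not> H x y"
  shows "\<exists>V E. digraph V E \<and>
    (\<Sum>c<K. real (s c - (k+l+1)) * real ((\<Sum>x\<in>Out c. s x) - (k+l+1)) ^ k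
         * real ((\<Sum>i\<in>In c. s i) - (k+l+1)) ^ l) / real (\<Sum>c<K. s c) ^ (k+l+1)
     \<le> s_density k l V E"
proof -
  define M where "M = k + l + 1"
  define V where "V = (\<lambda>(c, j). K * j + c) ` (SIGMA c:{..<K}. {..<s c})"
  have memV: "v \<in> V \<longleftrightarrow> v div K < s (v mod K)" for v
  proof
    assume "v \<in> V"
    then obtain c j where "c < K" "j < s c" "v = K * j + c" unfolding V_def by auto
    then show "v div K < s (v mod K)" using K by simp
  next
    assume a: "v div K < s (v mod K)"
    have "v = K * (v div K) + v mod K" by simp
    moreover have "v mod K < K" using K by simp
    ultimately show "v \<in> V" unfolding V_def using a
      by (intro image_eqI[where x="(v mod K, v div K)"]) auto
  qed
  have injV: "inj_on (\<lambda>(c, j). K * j + c) (SIGMA c:{..<K}. {..<s c})"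
  proof (rule inj_onI, clarsimp)
    fix c j c' j' assume "c < K" "c' < K" "K * j + c = K * j' + c'"
    have e1: "(K * j + c) mod K = c" using \<open>c < K\<close> by simp
    have e2: "(K * j' + c') mod K = c'" using \<open>c' < K\<close> by simp
    have "c = c'" using e1 e2 \<open>K * j + c = K * j' + c'\<close> by metis
    then show "c = c' \<and> j = j'" using K \<open>K * j + c = K * j' + c'\<close> by simp
  qed
  have finV: "finite V" unfolding V_def by auto
  have cardV: "card V = (\<Sum>c<K. s c)"
    unfolding V_def by (simp add: card_image[OF injV] card_SigmaI)
  define cls where "cls c = {v \<in> V. v mod K = c}" for c
  have cls_eq: "cls c = (\<lambda>j. K * j + c) ` {..<s c}" if "c < K" for c
  proof -
    have "v \<in> cls c \<longleftrightarrow> v \<in> (\<lambda>j. K * j + c) ` {..<s c}" for v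
    proof
      assume "v \<in> cls c"
      then have "v mod K = c" "v div K < s c" using memV unfolding cls_def by auto
      moreover have "v = K * (v div K) + v mod K" by simp
      ultimately show "v \<in> (\<lambda>j. K * j + c) ` {..<s c}" by (metis image_eqI lessThan_iff)
    next
      assume "v \<in> (\<lambda>j. K * j + c) ` {..<s c}"
      then show "v \<in> cls c" using that memV unfolding cls_def by auto
    qed
    then show ?thesis by blast
  qed
  have card_cls: "card (cls c) = s c" if "c < K" for c
  proof -
    have "inj_on (\<lambda>j. K * j + c) {..<s c}" using K by (auto simp: inj_on_def)
    then show ?thesis using cls_eq[OF that] by (simp add: card_image)
  qed
  have cls_sub: "cls c \<subseteq> V" for c unfolding cls_def by auto
  have fin_cls: "finite (cls c)" for c using finite_subset[OF cls_sub finV] .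
  have cls_disj: "c \<noteq> c' \<Longrightarrow> cls c \<inter> cls c' = {}" for c c' unfolding cls_def by auto
  have card_U: "card (\<Union>x\<in>X. cls x) = (\<Sum>x\<in>X. s x)" if "X \<subseteq> {..<K}" for X
  proof -
    have fX: "finite X" using that finite_subset by blast
    have "card (\<Union>x\<in>X. cls x) = (\<Sum>x\<in>X. card (cls x))"
      using fX fin_cls cls_disj by (intro card_UN_disjoint) auto
    also have "\<dots> = (\<Sum>x\<in>X. s x)" using that card_cls by (intro sum.cong) auto
    finally show ?thesis .
  qed
  define E where "E = {(u, v). u \<in> V \<and> v \<in> V \<and> H (u mod K) (v mod K)}"
  have "0 \<in> V" using memV s1[OF K] K by simp
  then have dg: "digraph V E" unfolding digraph_def E_def using finV irr by auto
  define Sc where "Sc c i = (if i = 0 then cls c else if i \<le> k then (\<Union>x\<in>Out c. cls x) else (\<Union>x\<in>In c. cls x))" for c i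
  define Mc where "Mc c = {\<phi> \<in> PiE {..<M} (Sc c). inj_on \<phi> {..<M}}" for c
  have Sc_sub: "Sc c i \<subseteq> V" for c i unfolding Sc_def using cls_sub by auto
  have fin_Sc: "finite (Sc c i)" for c i using finite_subset[OF Sc_sub finV] .
  have set0: "{0..k+l} = {..<M}" unfolding M_def by auto
  have Mc_sub: "Mc c \<subseteq> star_copies k l V E" if c: "c < K" for c
  proof
    fix \<phi> assume \<phi>: "\<phi> \<in> Mc c"
    have inS: "\<phi> a \<in> Sc c a" if "a < M" for a using \<phi> that unfolding Mc_def by auto
    have inV: "\<phi> a \<in> V" if "a < M" for a using inS[OF that] Sc_sub by auto
    have cl: "(a = 0 \<longrightarrow> \<phi> a mod K = c) \<and> (0 < a \<and> a \<le> k \<longrightarrow> \<phi> a mod K \<in> Out c)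
        \<and> (k < a \<longrightarrow> \<phi> a mod K \<in> In c)" if "a < M" for a
      using inS[OF that] unfolding Sc_def cls_def by (auto split: if_splits)
    have arc: "((\<phi> a, \<phi> b) \<in> E) = star_arc k l a b" if "a < M" "b < M" for a b
    proof -
      have "((\<phi> a, \<phi> b) \<in> E) = H (\<phi> a mod K) (\<phi> b mod K)"
        using inV that unfolding E_def by auto
      also have "\<dots> = star_arc k l a b"
      proof -
        note ca = cl[OF that(1)] and cb = cl[OF that(2)]
        have Mab: "a \<le> k + l" "b \<le> k + l" using that unfolding M_def by auto
        show ?thesis
        proof (cases "a = 0")
          case True
          then show ?thesis
          proof (cases "b = 0")
            case True then show ?thesis using \<open>a = 0\<close> irr by (simp add: star_arc_def)
          next
            case False
            then show ?thesis using \<open>a = 0\<close> ca cb Hout[OF c] Hin[OF c] asym Mab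
              by (cases "b \<le> k") (auto simp: star_arc_def)
          qed
        next
          case False
          then show ?thesis
          proof (cases "b = 0")
            case True
            then show ?thesis using \<open>a \<noteq> 0\<close> ca cb Hout[OF c] Hin[OF c] asym Mab
              by (cases "a \<le> k") (auto simp: star_arc_def)
          next
            case False
            have "\<phi> a mod K \<in> Out c \<union> In c" "\<phi> b mod K \<in> Out c \<union> In c"
              using ca cb \<open>a \<noteq> 0\<close> \<open>b \<noteq> 0\<close> by (cases "a \<le> k"; cases "b \<le> k"; auto)+
            then show ?thesis using indep[OF c] \<open>a \<noteq> 0\<close> \<open>b \<noteq> 0\<close> by (auto simp: star_arc_def)
          qed
        qed
      qed
      finally show ?thesis .
    qed
    show "\<phi> \<in> star_copies k l V E"
      unfolding star_copies_def set0 using \<phi> inV arc unfolding Mc_def by (auto simp: PiE_def)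
  qed
  have fin_star: "finite (star_copies k l V E)"
    unfolding star_copies_def using finV by (intro finite_subset[OF _ finite_PiE[of "{0..k+l}" "\<lambda>_. V"]]) auto
  have fin_Mc: "finite (Mc c)" for c
    unfolding Mc_def using fin_Sc by (intro finite_subset[OF _ finite_PiE[of "{..<M}" "Sc c"]]) auto
  have disj: "Mc c \<inter> Mc c' = {}" if "c \<noteq> c'" for c c'
  proof -
    have "\<phi> 0 \<in> cls c" if "\<phi> \<in> Mc c" for \<phi> c
      using that unfolding Mc_def M_def Sc_def by (auto simp: PiE_def Pi_def)
    then show ?thesis using cls_disj[OF that] by blast
  qed
  have "card (\<Union>c<K. Mc c) = (\<Sum>c<K. card (Mc c))"
    using fin_Mc disj by (intro card_UN_disjoint) auto
  moreover have "card (\<Union>c<K. Mc c) \<le> card (star_copies k l V E)"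
    using Mc_sub fin_star by (intro card_mono) auto
  ultimately have C1: "(\<Sum>c<K. card (Mc c)) \<le> card (star_copies k l V E)" by simp
  have C2: "(s c - M) * ((\<Sum>x\<in>Out c. s x) - M) ^ k * ((\<Sum>i\<in>In c. s i) - M) ^ l \<le> card (Mc c)"
    if c: "c < K" for c
  proof -
    have "(\<Prod>i<M. card (Sc c i) - M) \<le> card (Mc c)"
      unfolding Mc_def using fin_Sc by (intro inj_count) auto
    moreover have "(\<Prod>i<M. card (Sc c i) - M) = (s c - M) * (\<Prod>i<k+l. card (Sc c (Suc i)) - M)"
    proof -
      have MS: "M = Suc (k+l)" by (simp add: M_def)
      show ?thesis unfolding MS prod.lessThan_Suc_shift by (simp add: Sc_def card_cls[OF c])
    qed
    moreover have "(\<Prod>i<k+l. card (Sc c (Suc i)) - M)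
        = (\<Prod>i<k+l. if i < k then (\<Sum>x\<in>Out c. s x) - M else (\<Sum>i\<in>In c. s i) - M)"
      using card_U OutK[OF c] InK[OF c] by (intro prod.cong) (auto simp: Sc_def)
    ultimately show ?thesis by (simp add: prod_split_if)
  qed
  have N: "(\<Sum>c<K. real (s c - M) * real ((\<Sum>x\<in>Out c. s x) - M) ^ k
         * real ((\<Sum>i\<in>In c. s i) - M) ^ l) \<le> real (card (star_copies k l V E))"
  proof -
    have "(\<Sum>c<K. real (s c - M) * real ((\<Sum>x\<in>Out c. s x) - M) ^ k
         * real ((\<Sum>i\<in>In c. s i) - M) ^ l)
        = real (\<Sum>c<K. (s c - M) * ((\<Sum>x\<in>Out c. s x) - M) ^ k * ((\<Sum>i\<in>In c. s i) - M) ^ l)"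
      by simp
    also have "\<dots> \<le> real (\<Sum>c<K. card (Mc c))"
      using C2 by (intro of_nat_mono sum_mono) auto
    also have "\<dots> \<le> real (card (star_copies k l V E))" using C1 by linarith
    finally show ?thesis .
  qed
  show ?thesis
  proof (intro exI conjI)
    show "digraph V E" by (rule dg)
    show "(\<Sum>c<K. real (s c - (k+l+1)) * real ((\<Sum>x\<in>Out c. s x) - (k+l+1)) ^ k
         * real ((\<Sum>i\<in>In c. s i) - (k+l+1)) ^ l) / real (\<Sum>c<K. s c) ^ (k+l+1)
     \<le> s_density k l V E"
      unfolding s_density_def cardV
      apply (rule divide_right_mono)
      using N apply (simp add: M_def)
      by (rule zero_le_power) (simp add: sum_nonneg)
  qed
qed

lemma tend_sub:
  fixes a :: "nat \<Rightarrow> nat"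
  assumes "(\<lambda>n. real (a n) / real n) \<longlonglongrightarrow> L" "L \<ge> 0"
  shows "(\<lambda>n. real (a n - M) / real n) \<longlonglongrightarrow> L"
proof -
  have "(\<lambda>n. max 0 (real (a n) / real n - real M / real n)) \<longlonglongrightarrow> max 0 (L - 0)"
    by (intro tendsto_intros assms)
  then have 1: "(\<lambda>n. max 0 (real (a n) / real n - real M / real n)) \<longlonglongrightarrow> L" using assms(2) by simp
  have "eventually (\<lambda>n. max 0 (real (a n) / real n - real M / real n) = real (a n - M) / real n) sequentially"
    using eventually_gt_at_top[of 0]
  proof eventually_elim
    case (elim n)
    then show ?case
      by (cases "M \<le> a n") (auto simp: of_nat_diff diff_divide_distrib divide_right_mono)
  qed
  from Lim_transform_eventually[OF 1 this] show ?thesis .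
qed

lemma tend_floor:
  fixes w :: real
  assumes "w \<ge> 0"
  shows "(\<lambda>n. real (nat \<lfloor>w * real n\<rfloor> + 1) / real n) \<longlonglongrightarrow> w"
proof (rule tendsto_sandwich[of "\<lambda>n. w" _ _ "\<lambda>n. w + 1 / real n"])
  show "eventually (\<lambda>n. w \<le> real (nat \<lfloor>w * real n\<rfloor> + 1) / real n) sequentially"
    using eventually_gt_at_top[of 0]
  proof eventually_elim
    case (elim n)
    have "w * real n \<le> real (nat \<lfloor>w * real n\<rfloor> + 1)"
      using assms by (simp add: of_nat_nat) linarith
    then show ?case using elim by (simp add: field_simps)
  qed
  show "eventually (\<lambda>n. real (nat \<lfloor>w * real n\<rfloor> + 1) / real n \<le> w + 1 / real n) sequentially"
    using eventually_gt_at_top[of 0]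
  proof eventually_elim
    case (elim n)
    have "real (nat \<lfloor>w * real n\<rfloor> + 1) \<le> w * real n + 1"
      using assms by (simp add: of_nat_nat)
    then show ?case using elim by (simp add: field_simps)
  qed
  show "(\<lambda>n. w + 1 / real n) \<longlonglongrightarrow> w"
    using tendsto_add[OF tendsto_const lim_const_over_n[of 1]] by simp
qed simp

lemma alg_norm:
  fixes r D :: real and a b d :: "nat \<Rightarrow> real"
  assumes "r > 0"
  shows "(\<Sum>c\<in>A. (a c / r) * (b c / r) ^ k * (d c / r) ^ l) / (D / r) ^ (k+l+1)
       = (\<Sum>c\<in>A. a c * b c ^ k * d c ^ l) / D ^ (k+l+1)"
proof -
  have "(\<Sum>c\<in>A. (a c / r) * (b c / r) ^ k * (d c / r) ^ l) = (\<Sum>c\<in>A. a c * b c ^ k * d c ^ l / r ^ (k+l+1))"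
    using assms by (intro sum.cong) (simp_all add: power_divide power_add field_simps)
  also have "\<dots> = (\<Sum>c\<in>A. a c * b c ^ k * d c ^ l) / r ^ (k+l+1)"
    by (simp add: sum_divide_distrib)
  finally show ?thesis using assms by (simp add: power_divide)
qed

lemma density_le1:
  assumes "digraph V E"
  shows "s_density k l V E \<le> 1"
proof -
  have fV: "finite V" and ne: "V \<noteq> {}" using assms unfolding digraph_def by auto
  have "star_copies k l V E \<subseteq> PiE {0..k+l} (\<lambda>_. V)" unfolding star_copies_def by auto
  then have "card (star_copies k l V E) \<le> card (PiE {0..k+l} (\<lambda>_. V))"
    using fV by (intro card_mono) (auto intro: finite_PiE)
  also have "\<dots> = card V ^ (k+l+1)" by (simp add: card_PiE)
  finally have "real (card (star_copies k l V E)) \<le> real (card V) ^ (k+l+1)"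
    by (metis of_nat_le_iff of_nat_power)
  moreover have "real (card V) ^ (k+l+1) > 0" using fV ne by (simp add: card_gt_0_iff)
  ultimately show ?thesis unfolding s_density_def by simp
qed

lemma blowup_bound:
  fixes K k l :: nat and H :: "nat \<Rightarrow> nat \<Rightarrow> bool" and w :: "nat \<Rightarrow> real"
    and Out In :: "nat \<Rightarrow> nat set"
  assumes wpos: "\<And>c. c < K \<Longrightarrow> w c \<ge> 0" and wsum: "(\<Sum>c<K. w c) = 1"
    and irr: "\<And>a. \<not> H a a" and asym: "\<And>a b. H a b \<Longrightarrow> \<not> H b a"
    and OutK: "\<And>c. c < K \<Longrightarrow> Out c \<subseteq> {..<K}" and InK: "\<And>c. c < K \<Longrightarrow> In c \<subseteq> {..<K}"
    and Hout: "\<And>c x. c < K \<Longrightarrow> x \<in> Out c \<Longrightarrow> H c x"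
    and Hin: "\<And>c i. c < K \<Longrightarrow> i \<in> In c \<Longrightarrow> H i c"
    and indep: "\<And>c x y. c < K \<Longrightarrow> x \<in> Out c \<union> In c \<Longrightarrow> y \<in> Out c \<union> In c \<Longrightarrow> \<not> H x y"
  shows "(\<Sum>c<K. w c * (\<Sum>x\<in>Out c. w x) ^ k * (\<Sum>i\<in>In c. w i) ^ l)
     \<le> (SUP G \<in> {(V, E). digraph V E}. s_density k l (fst G) (snd G))"
proof -
  define S where "S = (SUP G \<in> {(V, E). digraph V E}. s_density k l (fst G) (snd G))"
  define M where "M = k + l + 1"
  have bdd: "bdd_above ((\<lambda>G. s_density k l (fst G) (snd G)) ` {(V, E). digraph V E})"
    by (rule bdd_aboveI[of _ 1]) (auto intro: density_le1)
  have upper: "s_density k l V E \<le> S" if "digraph V E" for V E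
    unfolding S_def using cSUP_upper[OF _ bdd, of "(V, E)"] that by simp
  have K: "K > 0" using wsum by (cases K) auto
  define sz where "sz n c = nat \<lfloor>w c * real n\<rfloor> + 1" for n c
  define L where "L n = (\<Sum>c<K. real (sz n c - M) * real ((\<Sum>x\<in>Out c. sz n x) - M) ^ k
         * real ((\<Sum>i\<in>In c. sz n i) - M) ^ l) / real (\<Sum>c<K. sz n c) ^ M" for n
  have Lle: "L n \<le> S" for n
  proof -
    have "\<exists>V E. digraph V E \<and> L n \<le> s_density k l V E"
      unfolding L_def M_def by (rule graph_bound[OF K _ irr asym OutK InK Hout Hin indep]) (simp add: sz_def)
    then obtain V E where "digraph V E" and le: "L n \<le> s_density k l V E" by blast
    then show ?thesis using upper by (meson order_trans)
  qed
  have f1: "(\<lambda>n. real (sz n c) / real n) \<longlonglongrightarrow> w c" if "c < K" for c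
    unfolding sz_def using tend_floor wpos[OF that] .
  have fsum: "(\<lambda>n. real (\<Sum>x\<in>X. sz n x) / real n) \<longlonglongrightarrow> (\<Sum>x\<in>X. w x)" if "X \<subseteq> {..<K}" for X
  proof -
    have "(\<lambda>n. \<Sum>x\<in>X. real (sz n x) / real n) \<longlonglongrightarrow> (\<Sum>x\<in>X. w x)"
      using f1 that by (intro tendsto_sum) auto
    then show ?thesis by (simp add: sum_divide_distrib)
  qed
  have snn: "(\<Sum>x\<in>X. w x) \<ge> 0" if "X \<subseteq> {..<K}" for X
    using that wpos by (intro sum_nonneg) auto
  define L' where "L' n = (\<Sum>c<K. (real (sz n c - M) / real n) * (real ((\<Sum>x\<in>Out c. sz n x) - M) / real n) ^ k
         * (real ((\<Sum>i\<in>In c. sz n i) - M) / real n) ^ l) / (real (\<Sum>c<K. sz n c) / real n) ^ M" for n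
  have "L' \<longlonglongrightarrow> (\<Sum>c<K. w c * (\<Sum>x\<in>Out c. w x) ^ k * (\<Sum>i\<in>In c. w i) ^ l) / 1 ^ M"
    unfolding L'_def
  proof (intro tendsto_divide tendsto_sum tendsto_mult tendsto_power)
    fix c assume c: "c \<in> {..<K}"
    show "(\<lambda>n. real (sz n c - M) / real n) \<longlonglongrightarrow> w c"
      using tend_sub[OF f1 wpos] c by auto
    show "(\<lambda>n. real ((\<Sum>x\<in>Out c. sz n x) - M) / real n) \<longlonglongrightarrow> (\<Sum>x\<in>Out c. w x)"
      using tend_sub[OF fsum snn] OutK c by auto
    show "(\<lambda>n. real ((\<Sum>x\<in>In c. sz n x) - M) / real n) \<longlonglongrightarrow> (\<Sum>x\<in>In c. w x)"
      using tend_sub[OF fsum snn] InK c by auto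
  next
    show "(\<lambda>n. real (\<Sum>c<K. sz n c) / real n) \<longlonglongrightarrow> 1"
      using fsum[of "{..<K}"] wsum by simp
  qed simp
  then have 1: "L' \<longlonglongrightarrow> (\<Sum>c<K. w c * (\<Sum>x\<in>Out c. w x) ^ k * (\<Sum>i\<in>In c. w i) ^ l)" by simp
  have "eventually (\<lambda>n. L' n = L n) sequentially"
    using eventually_gt_at_top[of 0]
  proof eventually_elim
    case (elim n)
    then show ?case unfolding L'_def L_def M_def by (intro alg_norm) simp
  qed
  from Lim_transform_eventually[OF 1 this] have "L \<longlonglongrightarrow> (\<Sum>c<K. w c * (\<Sum>x\<in>Out c. w x) ^ k * (\<Sum>i\<in>In c. w i) ^ l)" .
  then show ?thesis unfolding S_def[symmetric] using Lle by (intro LIMSEQ_le_const2) auto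
qed

lemma case_eq:
  fixes k :: nat and \<alpha> :: real
  assumes "0 \<le> \<alpha>" "\<alpha> \<le> 1"
  shows "(1 / 2 ^ (2 * k)) * (\<alpha> * (1 - \<alpha>) ^ (2 * k) + (1 - \<alpha>) * \<alpha> ^ (2 * k))
     \<le> (SUP G \<in> {(V, E). digraph V E}. s_density k k (fst G) (snd G))"
proof -
  define H where "H a b \<longleftrightarrow> (a, b) \<in> {(0::nat, 2::nat), (2, 1), (1, 3), (3, 0)}" for a b
  define w where "w c = (if c < 2 then \<alpha> / 2 else (1 - \<alpha>) / 2)" for c :: nat
  define Out where "Out c = (if c = 0 then {2} else if c = 1 then {3} else if c = 2 then {1} else {0::nat})" for c :: nat
  define In where "In c = (if c = 0 then {3} else if c = 1 then {2} else if c = 2 then {0} else {1::nat})" for c :: nat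
  have c4: "c < 4 \<Longrightarrow> c = 0 \<or> c = 1 \<or> c = 2 \<or> c = 3" for c :: nat by auto
  have "(\<Sum>c<4. w c * (\<Sum>x\<in>Out c. w x) ^ k * (\<Sum>i\<in>In c. w i) ^ k)
     \<le> (SUP G \<in> {(V, E). digraph V E}. s_density k k (fst G) (snd G))"
  proof (rule blowup_bound)
    show "\<And>c. c < 4 \<Longrightarrow> 0 \<le> w c" using assms by (auto simp: w_def)
    show "(\<Sum>c<4. w c) = 1" by (simp add: w_def eval_nat_numeral)
    show "\<And>a. \<not> H a a" by (auto simp: H_def)
    show "\<And>a b. H a b \<Longrightarrow> \<not> H b a" by (auto simp: H_def)
    show "\<And>c. c < 4 \<Longrightarrow> Out c \<subseteq> {..<4}" by (auto simp: Out_def)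
    show "\<And>c. c < 4 \<Longrightarrow> In c \<subseteq> {..<4}" by (auto simp: In_def)
    show "\<And>c x. c < 4 \<Longrightarrow> x \<in> Out c \<Longrightarrow> H c x" by (drule c4) (auto simp: Out_def H_def)
    show "\<And>c i. c < 4 \<Longrightarrow> i \<in> In c \<Longrightarrow> H i c" by (drule c4) (auto simp: In_def H_def)
    show "\<And>c x y. c < 4 \<Longrightarrow> x \<in> Out c \<union> In c \<Longrightarrow> y \<in> Out c \<union> In c \<Longrightarrow> \<not> H x y"
      by (drule c4) (auto simp: In_def Out_def H_def)
  qed
  moreover have "(\<Sum>c<4. w c * (\<Sum>x\<in>Out c. w x) ^ k * (\<Sum>i\<in>In c. w i) ^ k)
      = (1 / 2 ^ (2 * k)) * (\<alpha> * (1 - \<alpha>) ^ (2 * k) + (1 - \<alpha>) * \<alpha> ^ (2 * k))"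
  proof -
    have sq: "(x / 2) ^ k * (x / 2) ^ k = x ^ (2 * k) / 2 ^ (2 * k)" for x :: real
      by (simp add: power_divide mult_2 power_add)
    have "(\<Sum>c<4. w c * (\<Sum>x\<in>Out c. w x) ^ k * (\<Sum>i\<in>In c. w i) ^ k)
      = 2 * (\<alpha> / 2 * (((1 - \<alpha>) / 2) ^ k * ((1 - \<alpha>) / 2) ^ k))
        + 2 * ((1 - \<alpha>) / 2 * ((\<alpha> / 2) ^ k * (\<alpha> / 2) ^ k))"
      by (simp add: eval_nat_numeral w_def Out_def In_def)
    also have "\<dots> = (1 / 2 ^ (2 * k)) * (\<alpha> * (1 - \<alpha>) ^ (2 * k) + (1 - \<alpha>) * \<alpha> ^ (2 * k))"
      unfolding sq by (simp add: field_simps)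
    finally show ?thesis .
  qed
  ultimately show ?thesis by simp
qed

lemma shift_inj:
  fixes i j j' N :: nat
  assumes "j < N" "j' < N" "(i + j) mod N = (i + j') mod N"
  shows "j = j'"
proof (cases "j \<le> j'")
  case True
  then have "i + j \<le> i + j'" by simp
  from mod_eq_nat2E[OF assms(3) this] obtain s where "i + j' = i + j + N * s" by blast
  then have "j' = j + N * s" by simp
  then show ?thesis using assms(2) by (cases s) auto
next
  case False
  then have "i + j' \<le> i + j" by simp
  from mod_eq_nat2E[OF assms(3)[symmetric] this] obtain s where "i + j = i + j' + N * s" by blast
  then have "j = j' + N * s" by simp
  then show ?thesis using assms(1) by (cases s) auto
qed

lemma card_shift:
  fixes i N r :: nat
  assumes "r \<le> N"
  shows "card {j \<in> {..<N}. (i + j) mod N < r} = r"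
proof (cases "N = 0")
  case True then show ?thesis using assms by simp
next
  case False
  define p where "p j = (i + j) mod N" for j
  have inj: "inj_on p {..<N}" unfolding p_def by (rule inj_onI) (auto intro: shift_inj)
  have sub: "p ` {..<N} \<subseteq> {..<N}" unfolding p_def using False by auto
  have img: "p ` {..<N} = {..<N}"
    using card_subset_eq[OF _ sub] card_image[OF inj] by simp
  have "p ` {j \<in> {..<N}. p j < r} = {..<r}"
  proof
    show "p ` {j \<in> {..<N}. p j < r} \<subseteq> {..<r}" by auto
    show "{..<r} \<subseteq> p ` {j \<in> {..<N}. p j < r}"
    proof
      fix y assume "y \<in> {..<r}"
      then have "y \<in> p ` {..<N}" using img assms by auto
      then obtain j where "j < N" "y = p j" by auto
      then show "y \<in> p ` {j \<in> {..<N}. p j < r}" using \<open>y \<in> {..<r}\<close> by auto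
    qed
  qed
  moreover have "inj_on p {j \<in> {..<N}. p j < r}" using inj by (rule inj_on_subset) auto
  ultimately have "card {j \<in> {..<N}. p j < r} = r" using card_image by (metis card_lessThan)
  then show ?thesis unfolding p_def .
qed

lemma card_shift_compl:
  fixes i N r :: nat
  assumes "r \<le> N"
  shows "card {j \<in> {..<N}. \<not> (i + j) mod N < r} = N - r"
proof -
  have U: "{..<N} = {j \<in> {..<N}. (i + j) mod N < r} \<union> {j \<in> {..<N}. \<not> (i + j) mod N < r}" by auto
  have N1: "N = card ({j \<in> {..<N}. (i + j) mod N < r} \<union> {j \<in> {..<N}. \<not> (i + j) mod N < r})"
    by (subst U[symmetric]) simp
  have "card ({j \<in> {..<N}. (i + j) mod N < r} \<union> {j \<in> {..<N}. \<not> (i + j) mod N < r})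
      = card {j \<in> {..<N}. (i + j) mod N < r} + card {j \<in> {..<N}. \<not> (i + j) mod N < r}"
    by (rule card_Un_disjoint) auto
  then have "N = card {j \<in> {..<N}. (i + j) mod N < r} + card {j \<in> {..<N}. \<not> (i + j) mod N < r}"
    using N1 by linarith
  then show ?thesis using card_shift[OF assms, of i] by simp
qed

lemma sum_lessThan_add:
  fixes f :: "nat \<Rightarrow> 'a::comm_monoid_add"
  shows "(\<Sum>c<a+b. f c) = (\<Sum>c<a. f c) + (\<Sum>j<b. f (a + j))"
  by (induction b) (simp_all add: ac_simps)

lemma case_gt:
  fixes k l :: nat and \<alpha> d :: real
  assumes kl: "l < k" "1 \<le> l" and a: "0 \<le> \<alpha>" "\<alpha> \<le> 1"
    and d: "real l / real (k + l - 1) \<le> d" "d \<le> 1"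
  shows "\<alpha> * (1 - \<alpha>) ^ (k + l) * d ^ k * (1 - d) ^ l
     + (real (k - 1) / real (k + l - 1)) ^ (k - 1) * (real l / real (k + l - 1)) ^ l
       * (1 - \<alpha>) * \<alpha> ^ (k + l) * (1 - d)
     \<le> (SUP G \<in> {(V, E). digraph V E}. s_density k l (fst G) (snd G))"
proof -
  define N where "N = k + l - 1"
  define r where "r = k - 1"
  have N0: "N > 0" and rN: "r \<le> N" and r0: "r > 0" and Nr: "N - r = l" and Nl: "N - l = r"
    using kl unfolding N_def r_def by auto
  define x where "x = real r / real N"
  have x0: "x > 0" and x1: "1 - x = real l / real N" unfolding x_def using N0 r0 Nr rN
    by (auto simp: field_simps of_nat_diff[symmetric])
  define \<beta> where "\<beta> = (1 - d) / x"
  have \<beta>x: "\<beta> * x = 1 - d" unfolding \<beta>_def using x0 by simp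
  have \<beta>0: "\<beta> \<ge> 0" unfolding \<beta>_def using x0 d by simp
  have "1 - d \<le> x"
    using d(1) x1 unfolding N_def by simp
  then have \<beta>1: "\<beta> \<le> 1" unfolding \<beta>_def using x0 by simp
  define H where "H a b \<longleftrightarrow> (a < N \<and> b = N + N)
     \<or> (N \<le> a \<and> a < N + N \<and> b < N \<and> (b + (a - N)) mod N < r)
     \<or> (a < N \<and> N \<le> b \<and> b < N + N \<and> \<not> (a + (b - N)) mod N < r)" for a b
  define Out where "Out c = (if c < N then insert (N + N) ((\<lambda>j. N + j) ` {j \<in> {..<N}. \<not> (c + j) mod N < r})
      else if c < N + N then {i \<in> {..<N}. (i + (c - N)) mod N < r} else {})" for c
  define In where "In c = (if c < N then (\<lambda>j. N + j) ` {j \<in> {..<N}. (c + j) mod N < r}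
      else if c < N + N then {i \<in> {..<N}. \<not> (i + (c - N)) mod N < r} else {})" for c
  define w where "w c = (if c < N then \<alpha> / N else if c < N + N then (1 - \<alpha>) * \<beta> / N
      else (1 - \<alpha>) * (1 - \<beta>))" for c
  have sumA: "(\<Sum>c<N. f c) = real N * v" if "\<And>c. c < N \<Longrightarrow> f c = v" for f :: "nat \<Rightarrow> real" and v
    using that by (simp add: sum.cong[of "{..<N}" "{..<N}" f "\<lambda>_. v"])
  have wsum: "(\<Sum>c<Suc (N + N). w c) = 1"
  proof -
    have "(\<Sum>c<Suc (N + N). w c) = (\<Sum>c<N. w c) + (\<Sum>j<N. w (N + j)) + w (N + N)"
      by (simp add: sum_lessThan_add)
    also have "\<dots> = real N * (\<alpha> / N) + real N * ((1 - \<alpha>) * \<beta> / N) + (1 - \<alpha>) * (1 - \<beta>)"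
      by (subst sumA[of _ "\<alpha> / N"], simp add: w_def, subst sumA[of _ "(1 - \<alpha>) * \<beta> / N"])
        (simp_all add: w_def)
    also have "\<dots> = 1" using N0 by (simp add: field_simps)
    finally show ?thesis .
  qed
  have "(\<Sum>c<Suc (N + N). w c * (\<Sum>x\<in>Out c. w x) ^ k * (\<Sum>i\<in>In c. w i) ^ l)
     \<le> (SUP G \<in> {(V, E). digraph V E}. s_density k l (fst G) (snd G))"
  proof (rule blowup_bound[OF _ wsum])
    show "\<And>c. c < Suc (N + N) \<Longrightarrow> 0 \<le> w c" using a \<beta>0 \<beta>1 by (auto simp: w_def)
    show "\<And>a. \<not> H a a" by (auto simp: H_def)
    show "\<And>a b. H a b \<Longrightarrow> \<not> H b a" by (auto simp: H_def)
    show "\<And>c. c < Suc (N + N) \<Longrightarrow> Out c \<subseteq> {..<Suc (N + N)}" by (auto simp: Out_def)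
    show "\<And>c. c < Suc (N + N) \<Longrightarrow> In c \<subseteq> {..<Suc (N + N)}" by (auto simp: In_def)
    show "\<And>c x. c < Suc (N + N) \<Longrightarrow> x \<in> Out c \<Longrightarrow> H c x" by (auto simp: Out_def H_def split: if_splits)
    show "\<And>c i. c < Suc (N + N) \<Longrightarrow> i \<in> In c \<Longrightarrow> H i c" by (auto simp: In_def H_def split: if_splits)
    show "\<And>c x y. c < Suc (N + N) \<Longrightarrow> x \<in> Out c \<union> In c \<Longrightarrow> y \<in> Out c \<union> In c \<Longrightarrow> \<not> H x y"
      by (auto simp: In_def Out_def H_def split: if_splits)
  qed
  moreover have "(\<Sum>c<Suc (N + N). w c * (\<Sum>x\<in>Out c. w x) ^ k * (\<Sum>i\<in>In c. w i) ^ l)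
    = \<alpha> * (1 - \<alpha>) ^ (k + l) * d ^ k * (1 - d) ^ l
     + (real (k - 1) / real (k + l - 1)) ^ (k - 1) * (real l / real (k + l - 1)) ^ l
       * (1 - \<alpha>) * \<alpha> ^ (k + l) * (1 - d)"
  proof -
    have cJ: "card {j \<in> {..<N}. \<not> (c + j) mod N < r} = l" for c
      using card_shift_compl[OF rN, of c] Nr by simp
    have cJ': "card {j \<in> {..<N}. (c + j) mod N < r} = r" for c
      using card_shift[OF rN, of c] .
    have injN: "inj_on (\<lambda>j. N + j) X" for X by (auto simp: inj_on_def)
    have TA: "w c * (\<Sum>x\<in>Out c. w x) ^ k * (\<Sum>i\<in>In c. w i) ^ l
        = \<alpha> / N * ((1 - \<alpha>) * d) ^ k * ((1 - \<alpha>) * (1 - d)) ^ l" if c: "c < N" for c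
    proof -
      have "(\<Sum>x\<in>Out c. w x) = w (N + N) + (\<Sum>x\<in>(\<lambda>j. N + j) ` {j \<in> {..<N}. \<not> (c + j) mod N < r}. w x)"
        using c apply (simp add: Out_def) by (subst sum.insert) auto
      also have "\<dots> = (1 - \<alpha>) * (1 - \<beta>) + (\<Sum>j\<in>{j \<in> {..<N}. \<not> (c + j) mod N < r}. w (N + j))"
        by (simp add: sum.reindex[OF injN] w_def)
      also have "\<dots> = (1 - \<alpha>) * (1 - \<beta>) + real l * ((1 - \<alpha>) * \<beta> / N)"
        using cJ[of c] by (simp add: w_def)
      also have "\<dots> = (1 - \<alpha>) * d"
      proof -
        have "real l * ((1 - \<alpha>) * \<beta> / N) = (1 - \<alpha>) * \<beta> * (1 - x)" using x1 by simp
        then show ?thesis using \<beta>x by (simp add: algebra_simps)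
      qed
      finally have O: "(\<Sum>x\<in>Out c. w x) = (1 - \<alpha>) * d" .
      have "(\<Sum>x\<in>In c. w x) = (\<Sum>j\<in>{j \<in> {..<N}. (c + j) mod N < r}. w (N + j))"
        using c by (simp add: In_def sum.reindex[OF injN])
      also have "\<dots> = real r * ((1 - \<alpha>) * \<beta> / N)"
        using cJ'[of c] by (simp add: w_def)
      also have "\<dots> = (1 - \<alpha>) * (\<beta> * x)" unfolding x_def by simp
      also have "\<dots> = (1 - \<alpha>) * (1 - d)" using \<beta>x by simp
      finally have I: "(\<Sum>x\<in>In c. w x) = (1 - \<alpha>) * (1 - d)" .
      show ?thesis unfolding O I using c by (simp add: w_def)
    qed
    have TB: "w (N + j) * (\<Sum>x\<in>Out (N + j). w x) ^ k * (\<Sum>i\<in>In (N + j). w i) ^ l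
        = (1 - \<alpha>) * \<beta> / N * (\<alpha> * x) ^ k * (\<alpha> * (1 - x)) ^ l" if j: "j < N" for j
    proof -
      have e1: "{i \<in> {..<N}. (i + j) mod N < r} = {i \<in> {..<N}. (j + i) mod N < r}"
        by (simp add: add.commute)
      have e2: "{i \<in> {..<N}. \<not> (i + j) mod N < r} = {i \<in> {..<N}. \<not> (j + i) mod N < r}"
        by (simp add: add.commute)
      have "(\<Sum>x\<in>Out (N + j). w x) = (\<Sum>i\<in>{i \<in> {..<N}. (j + i) mod N < r}. \<alpha> / N)"
        using j e1 by (intro sum.cong) (auto simp: Out_def w_def)
      also have "\<dots> = \<alpha> * x" using cJ'[of j] unfolding x_def by simp
      finally have O: "(\<Sum>x\<in>Out (N + j). w x) = \<alpha> * x" .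
      have "(\<Sum>x\<in>In (N + j). w x) = (\<Sum>i\<in>{i \<in> {..<N}. \<not> (j + i) mod N < r}. \<alpha> / N)"
        using j e2 by (intro sum.cong) (auto simp: In_def w_def)
      also have "\<dots> = \<alpha> * (1 - x)" using cJ[of j] x1 by simp
      finally have I: "(\<Sum>x\<in>In (N + j). w x) = \<alpha> * (1 - x)" .
      show ?thesis unfolding O I using j by (simp add: w_def)
    qed
    have TC: "(\<Sum>x\<in>Out (N + N). w x) = 0" by (simp add: Out_def)
    have "(\<Sum>c<Suc (N + N). w c * (\<Sum>x\<in>Out c. w x) ^ k * (\<Sum>i\<in>In c. w i) ^ l)
      = (\<Sum>c<N. w c * (\<Sum>x\<in>Out c. w x) ^ k * (\<Sum>i\<in>In c. w i) ^ l)
        + (\<Sum>j<N. w (N + j) * (\<Sum>x\<in>Out (N + j). w x) ^ k * (\<Sum>i\<in>In (N + j). w i) ^ l)"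
      using kl by (simp add: sum_lessThan_add TC)
    also have "\<dots> = real N * (\<alpha> / N * ((1 - \<alpha>) * d) ^ k * ((1 - \<alpha>) * (1 - d)) ^ l)
        + real N * ((1 - \<alpha>) * \<beta> / N * (\<alpha> * x) ^ k * (\<alpha> * (1 - x)) ^ l)"
      by (subst sumA[OF TA], assumption, subst sumA[OF TB], assumption) simp
    also have "\<dots> = \<alpha> * (1 - \<alpha>) ^ (k + l) * d ^ k * (1 - d) ^ l
        + (1 - \<alpha>) * \<alpha> ^ (k + l) * (\<beta> * x) * x ^ (k - 1) * (1 - x) ^ l"
    proof -
      have xk: "x ^ k = x * x ^ (k - 1)" using kl by (cases k) auto
      have 1: "real N * (\<alpha> / N * ((1 - \<alpha>) * d) ^ k * ((1 - \<alpha>) * (1 - d)) ^ l)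
          = \<alpha> * (((1 - \<alpha>) * d) ^ k * ((1 - \<alpha>) * (1 - d)) ^ l)" using N0 by simp
      have 2: "((1 - \<alpha>) * d) ^ k * ((1 - \<alpha>) * (1 - d)) ^ l = (1 - \<alpha>) ^ (k + l) * d ^ k * (1 - d) ^ l"
        by (simp add: power_mult_distrib power_add)
      have 3: "real N * ((1 - \<alpha>) * \<beta> / N * (\<alpha> * x) ^ k * (\<alpha> * (1 - x)) ^ l)
          = (1 - \<alpha>) * \<beta> * ((\<alpha> * x) ^ k * (\<alpha> * (1 - x)) ^ l)" using N0 by simp
      have 4: "(\<alpha> * x) ^ k * (\<alpha> * (1 - x)) ^ l = \<alpha> ^ (k + l) * x * x ^ (k - 1) * (1 - x) ^ l"
        unfolding power_mult_distrib power_add xk by simp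
      show ?thesis unfolding 1 2 3 4 by (simp add: ac_simps)
    qed
    also have "\<dots> = \<alpha> * (1 - \<alpha>) ^ (k + l) * d ^ k * (1 - d) ^ l
     + (real (k - 1) / real (k + l - 1)) ^ (k - 1) * (real l / real (k + l - 1)) ^ l
       * (1 - \<alpha>) * \<alpha> ^ (k + l) * (1 - d)"
      unfolding \<beta>x x1 unfolding x_def r_def N_def by (simp add: ac_simps)
    finally show ?thesis .
  qed
  ultimately show ?thesis by simp
qed

lemma sum_split_if:
  fixes u v :: real
  shows "(\<Sum>i<a+b. if i < a then u else v) = real a * u + real b * v"
proof (induction b)
  case 0
  then show ?case by simp
next
  case (Suc b)
  then show ?case by (simp add: algebra_simps)
qed

lemma amgm_max:
  fixes a b :: nat and y :: real
  assumes ab: "a > 0" "b > 0" and y: "0 \<le> y" "y \<le> 1"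
  shows "y ^ a * (1 - y) ^ b \<le> (real a / real (a + b)) ^ a * (real b / real (a + b)) ^ b"
proof -
  define n where "n = real (a + b)"
  define p where "p = real a / n"
  define q where "q = real b / n"
  have n0: "n > 0" and p0: "p > 0" and q0: "q > 0" using ab unfolding n_def p_def q_def by auto
  define z where "z i = (if i < a then y / p else (1 - y) / q)" for i
  have "(\<Sum>i\<in>{..<a+b}. z i / card {..<a+b}) \<ge> (\<Prod>i\<in>{..<a+b}. z i) powr (1 / card {..<a+b})"
    by (rule arith_geom_mean) (use ab y p0 q0 in \<open>auto simp: z_def\<close>)
  moreover have "(\<Sum>i\<in>{..<a+b}. z i / card {..<a+b}) = 1"
  proof -
    have "(\<Sum>i\<in>{..<a+b}. z i / card {..<a+b}) = (\<Sum>i\<in>{..<a+b}. z i) / n"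
      by (simp add: sum_divide_distrib n_def)
    also have "(\<Sum>i\<in>{..<a+b}. z i) = real a * (y / p) + real b * ((1 - y) / q)"
      unfolding z_def by (rule sum_split_if)
    also have "\<dots> = n" using ab n0 unfolding p_def q_def by (simp add: field_simps)
    finally show ?thesis using n0 by simp
  qed
  moreover have P: "(\<Prod>i\<in>{..<a+b}. z i) = (y / p) ^ a * ((1 - y) / q) ^ b"
    unfolding z_def by (rule prod_split_if)
  ultimately have le: "((y / p) ^ a * ((1 - y) / q) ^ b) powr (1 / real (a + b)) \<le> 1" by simp
  have nn: "(y / p) ^ a * ((1 - y) / q) ^ b \<ge> 0" using y p0 q0 by simp
  have "(y / p) ^ a * ((1 - y) / q) ^ b \<le> 1"
  proof (rule ccontr)
    assume "\<not> ?thesis"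
    then have "1 < ((y / p) ^ a * ((1 - y) / q) ^ b) powr (1 / real (a + b))"
      using ab by (intro gr_one_powr) auto
    then show False using le by simp
  qed
  then have "y ^ a * (1 - y) ^ b \<le> p ^ a * q ^ b"
    using p0 q0 by (simp add: power_divide field_simps)
  then show ?thesis unfolding p_def q_def n_def .
qed

lemma dom:
  fixes \<alpha> d x C :: real and k l :: nat
  assumes a: "0 \<le> \<alpha>" "\<alpha> \<le> 1 / 2" and d: "0 \<le> d" "d \<le> x" and k: "k \<ge> 1"
    and C: "d ^ (k - 1) * (1 - d) ^ l \<le> C" and C0: "C \<ge> 0" and xC: "x ^ k * (1 - x) ^ l = x * C"
  shows "\<alpha> * (1 - \<alpha>) ^ (k + l) * d ^ k * (1 - d) ^ l + C * (1 - \<alpha>) * \<alpha> ^ (k + l) * (1 - d)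
    \<le> \<alpha> * (1 - \<alpha>) ^ (k + l) * x ^ k * (1 - x) ^ l + C * (1 - \<alpha>) * \<alpha> ^ (k + l) * (1 - x)"
proof -
  define P where "P = \<alpha> * (1 - \<alpha>) ^ (k + l)"
  define Q where "Q = (1 - \<alpha>) * \<alpha> ^ (k + l)"
  have PQ: "Q \<le> P"
  proof -
    have "\<alpha> ^ (k + l - 1) \<le> (1 - \<alpha>) ^ (k + l - 1)" using a by (intro power_mono) auto
    then have "(\<alpha> * (1 - \<alpha>)) * \<alpha> ^ (k + l - 1) \<le> (\<alpha> * (1 - \<alpha>)) * (1 - \<alpha>) ^ (k + l - 1)"
      using a by (intro mult_left_mono) auto
    moreover have "\<alpha> ^ (k + l) = \<alpha> * \<alpha> ^ (k + l - 1)" "(1 - \<alpha>) ^ (k + l) = (1 - \<alpha>) * (1 - \<alpha>) ^ (k + l - 1)"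
      using k by (metis Suc_diff_1 add_gr_0 less_le_trans zero_less_one power_Suc)+
    ultimately show ?thesis unfolding P_def Q_def by (simp add: ac_simps)
  qed
  have P0: "P \<ge> 0" unfolding P_def using a by simp
  have dk: "d ^ k * (1 - d) ^ l \<le> d * C"
  proof -
    have "d ^ k = d * d ^ (k - 1)" using k by (cases k) auto
    then show ?thesis using C d by (simp add: mult.assoc mult_left_mono)
  qed
  have "P * (d ^ k * (1 - d) ^ l) + C * Q * (1 - d) \<le> P * (d * C) + C * Q * (1 - d)"
    using dk P0 by (simp add: mult_left_mono)
  also have "\<dots> = C * Q + C * d * (P - Q)" by (simp add: algebra_simps)
  also have "\<dots> \<le> C * Q + C * x * (P - Q)"
    using PQ C0 d by (intro add_left_mono mult_right_mono mult_left_mono) auto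
  also have "\<dots> = P * (x * C) + C * Q * (1 - x)" by (simp add: algebra_simps)
  finally show ?thesis unfolding P_def Q_def xC[symmetric] by (simp add: ac_simps)
qed

theorem lemma3p1:
  fixes k l :: nat
  assumes "k \<ge> l" and "l \<ge> 1"
  shows "(SUP G \<in> {(V, E). digraph V E}. s_density k l (fst G) (snd G)) \<ge> OPT k l"
proof -
  define S where "S = (SUP G \<in> {(V, E). digraph V E}. s_density k l (fst G) (snd G))"
  show ?thesis
  proof (cases "k = l")
    case True
    have "(SUP \<alpha>\<in>{0..1::real}. \<alpha> * (1 - \<alpha>) ^ (2 * k) + (1 - \<alpha>) * \<alpha> ^ (2 * k)) \<le> 2 ^ (2 * k) * S"
    proof (rule cSUP_least)
      show "{0..1::real} \<noteq> {}" by simp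
      fix \<alpha> :: real assume "\<alpha> \<in> {0..1}"
      then have "(1 / 2 ^ (2 * k)) * (\<alpha> * (1 - \<alpha>) ^ (2 * k) + (1 - \<alpha>) * \<alpha> ^ (2 * k)) \<le> S"
        using case_eq[of \<alpha> k] True unfolding S_def by auto
      then show "\<alpha> * (1 - \<alpha>) ^ (2 * k) + (1 - \<alpha>) * \<alpha> ^ (2 * k) \<le> 2 ^ (2 * k) * S"
        by (simp add: field_simps)
    qed
    then have "(1 / 2 ^ (2 * k)) * (SUP \<alpha>\<in>{0..1::real}. \<alpha> * (1 - \<alpha>) ^ (2 * k) + (1 - \<alpha>) * \<alpha> ^ (2 * k)) \<le> S"
      by (simp add: field_simps)
    then show ?thesis using True unfolding OPT_def S_def by simp
  next
    case False
    then have kl: "l < k" using assms by simp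
    define N where "N = k + l - 1"
    define x where "x = real (k - 1) / real N"
    define C where "C = real (k - 1) ^ (k - 1) * real l ^ l / real N ^ N"
    have N0: "N > 0" and Neq: "N = (k - 1) + l" using kl assms unfolding N_def by auto
    have RN: "real N = real (k - 1) + real l" using Neq by simp
    have RN0: "real N > 0" using N0 by simp
    have "1 - x = (real N - real (k - 1)) / real N"
      unfolding x_def using RN0 by (simp add: diff_divide_distrib)
    then have x1: "1 - x = real l / real N" using RN by simp
    have Ceq: "C = x ^ (k - 1) * (1 - x) ^ l"
    proof -
      have "real N ^ N = real N ^ (k - 1) * real N ^ l" by (metis Neq power_add)
      then show ?thesis unfolding C_def x1 unfolding x_def by (simp add: power_divide)
    qed
    have Ceq3: "C = (real (k - 1) / real (k + l - 1)) ^ (k - 1) * (real l / real (k + l - 1)) ^ l"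
      using Ceq x1 unfolding x_def N_def by simp
    have C0: "C \<ge> 0" unfolding C_def by simp
    have Cmax: "y ^ (k - 1) * (1 - y) ^ l \<le> C" if "0 \<le> y" "y \<le> 1" for y
    proof -
      have Ceq2: "C = (real (k - 1) / real ((k - 1) + l)) ^ (k - 1) * (real l / real ((k - 1) + l)) ^ l"
        using Ceq x1 unfolding x_def Neq by simp
      show ?thesis unfolding Ceq2 using amgm_max[of "k - 1" l y] that kl assms by simp
    qed
    have xC: "x ^ k * (1 - x) ^ l = x * C"
      unfolding Ceq using kl by (cases k) auto
    have xl: "real l / real (k + l - 1) \<le> x" unfolding x_def N_def using kl
      by (intro divide_right_mono) auto
    have x01: "0 \<le> x" "x \<le> 1" unfolding x_def apply simp
      using x1 by (metis diff_ge_0_iff_ge divide_nonneg_nonneg of_nat_0_le_iff x_def)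
    have gt: "\<alpha> * (1 - \<alpha>) ^ (k + l) * d ^ k * (1 - d) ^ l + C * (1 - \<alpha>) * \<alpha> ^ (k + l) * (1 - d) \<le> S"
      if "0 \<le> \<alpha>" "\<alpha> \<le> 1" "x \<le> d" "d \<le> 1" for \<alpha> d
    proof -
      have "real l / real (k + l - 1) \<le> d" using order_trans[OF xl that(3)] .
      from case_gt[OF kl assms(2) that(1,2) this that(4)]
      show ?thesis unfolding S_def Ceq3 by (simp add: ac_simps)
    qed
    have "(SUP p \<in> {0..1/2::real} \<times> {0..real k / real (k + l)}.
         (case p of (\<alpha>, d) \<Rightarrow>
           \<alpha> * (1 - \<alpha>) ^ (k + l) * d ^ k * (1 - d) ^ l
           + (real (k - 1) ^ (k - 1) * real l ^ l / real (k + l - 1) ^ (k + l - 1))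
             * (1 - \<alpha>) * \<alpha> ^ (k + l) * (1 - d))) \<le> S"
    proof (rule cSUP_least)
      show "{0..1/2::real} \<times> {0..real k / real (k + l)} \<noteq> {}" by simp
      fix p assume p: "p \<in> {0..1/2::real} \<times> {0..real k / real (k + l)}"
      obtain \<alpha> d where pd: "p = (\<alpha>, d)" by (cases p)
      have a: "0 \<le> \<alpha>" "\<alpha> \<le> 1/2" and d: "0 \<le> d" "d \<le> real k / real (k + l)" using p pd by auto
      have "real k / real (k + l) \<le> 1" using kl by (simp add: divide_le_eq_1)
      then have d1: "d \<le> 1" using d(2) by linarith
      have "\<alpha> * (1 - \<alpha>) ^ (k + l) * d ^ k * (1 - d) ^ l + C * (1 - \<alpha>) * \<alpha> ^ (k + l) * (1 - d) \<le> S"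
      proof (cases "x \<le> d")
        case True
        then show ?thesis using gt a d1 by simp
      next
        case False
        have "\<alpha> * (1 - \<alpha>) ^ (k + l) * d ^ k * (1 - d) ^ l + C * (1 - \<alpha>) * \<alpha> ^ (k + l) * (1 - d)
          \<le> \<alpha> * (1 - \<alpha>) ^ (k + l) * x ^ k * (1 - x) ^ l + C * (1 - \<alpha>) * \<alpha> ^ (k + l) * (1 - x)"
          using False a d d1 kl by (intro dom Cmax C0 xC) auto
        also have "\<dots> \<le> S" using gt[OF _ _ order_refl x01(2)] a by simp
        finally show ?thesis .
      qed
      then show "(case p of (\<alpha>, d) \<Rightarrow>
           \<alpha> * (1 - \<alpha>) ^ (k + l) * d ^ k * (1 - d) ^ l
           + (real (k - 1) ^ (k - 1) * real l ^ l / real (k + l - 1) ^ (k + l - 1))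
             * (1 - \<alpha>) * \<alpha> ^ (k + l) * (1 - d)) \<le> S"
        unfolding pd C_def N_def by simp
    qed
    then show ?thesis using False unfolding OPT_def S_def by simp
  qed
qed

end
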